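(* Let $A,B\in\mathcal{M}_n$, let $\psi\colon H^*(M(A);\mathbb{Z})\to H^*(M(B);\mathbb{Z})$ be a graded ring isomorphism, and denote also by $\psi$ its rationalization $H^*(M(A);\mathbb{Q})\to H^*(M(B);\mathbb{Q})$. Let $\sigma$ be a permutation of $\{1,\dots,n\}$ and $q_1,\dots,q_n$ nonzero rationals with $\psi(y^A_j)=q_jy^B_{\sigma(j)}$ for all $j$ (such data exist). Then $q_j\in\{\pm\tfrac12,\pm1,\pm2\}$ for every $j$, and (1) $q_j\in\{\pm\tfrac12\}$ if and only if $\alpha^A_j\not\equiv0\pmod2$ and $\alpha^B_{\sigma(j)}\equiv0\pmod 2$; (2) $q_j\in\{\pm2\}$ if and only if $\alpha^A_j\equiv0\pmod2$ and $\alpha^B_{\sigma(j)}\not\equiv0\pmod2$. Moreover, if $q_j=\pm1$ for all $j$, then $\psi(p(M(A)))=p(M(B))$, where $p$ denotes the total Pontrjagin class.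
   Context: Let $\mathcal{M}_n$ be the set of integral strictly upper triangular $n\times n$ matrices $A=(A^i_j)$ ($A^i_j$ is the $(i,j)$ entry, and $A^i_j=0$ for $i\ge j$). For $A\in\mathcal{M}_n$, $M(A)$ denotes the Bott manifold obtained as the quotient of $(S^3)^n$ ($S^3\subset\mathbb{C}^2$ the unit sphere) by the free $(S^1)^n$-action $(g_1,\dots,g_n)\cdot((z_1,w_1),\dots,(z_n,w_n))=\big(((\prod_{k<j}g_k^{-A^k_j})g_jz_j,\ g_jw_j)\big)_{j=1}^n$. Let $x^A_j\in H^2(M(A);\mathbb{Z})$ be the first Chern class of the line bundle obtained as the quotient of $(S^3)^n\times\mathbb{C}$ where $g$ acts on the $\mathbb{C}$-factor by $g_j^{-1}$. Put $\alpha^A_j=\sum_{i<j}A^i_jx^A_i\in H^2(M(A);\mathbb{Z})$; congruences mod $2$ are taken in $H^2(M(A);\mathbb{Z})$ with basis $x^A_1,\dots,x^A_n$. Then $H^*(M(A);\mathbb{Z})=\mathbb{Z}[x^A_1,\dots,x^A_n]/((x^A_j)^2-\alpha^A_jx^A_j\mid j=1,\dots,n)$. Define $y^A_j=x^A_j-\tfrac12\alpha^A_j\in H^2(M(A);\mathbb{Q})$. The same notation is used for $B$. *)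

theory Defs
  imports Complex_Main "HOL-Library.Poly_Mapping" "HOL-Algebra.QuotRing"
begin

text \<open>Integral polynomials in the variables x_1, x_2, ... (monomials are finitely
supported exponent vectors nat =>0 nat).\<close>
type_synonym ipoly = "(nat \<Rightarrow>\<^sub>0 nat) \<Rightarrow>\<^sub>0 int"

definition Xv :: "nat \<Rightarrow> ipoly" where
  "Xv i = Poly_Mapping.single (Poly_Mapping.single i 1) 1"

definition polyR :: "nat \<Rightarrow> ipoly ring" where
  "polyR n = \<lparr>carrier = {p::ipoly. \<forall>m\<in>Poly_Mapping.keys p. Poly_Mapping.keys m \<subseteq> {1..n}},
              monoid.mult = (*), one = 1, zero = 0, add = (+)\<rparr>"

text \<open>M_n: integral strictly upper triangular n x n matrices, entries A i j, 1 <= i,j <= n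
  (all entries outside the index range are zero).\<close>
definition bott_mat :: "nat \<Rightarrow> (nat \<Rightarrow> nat \<Rightarrow> int) set" where
  "bott_mat n = {A. \<forall>i j. A i j \<noteq> 0 \<longrightarrow> 1 \<le> i \<and> i < j \<and> j \<le> n}"

definition alphaP :: "(nat \<Rightarrow> nat \<Rightarrow> int) \<Rightarrow> nat \<Rightarrow> ipoly" where
  "alphaP A j = (\<Sum>i\<in>{1..<j}. of_int (A i j) * Xv i)"

definition bott_ideal :: "nat \<Rightarrow> (nat \<Rightarrow> nat \<Rightarrow> int) \<Rightarrow> ipoly set" where
  "bott_ideal n A = genideal (polyR n) {Xv j * Xv j - alphaP A j * Xv j | j. j \<in> {1..n}}"

definition Hcoh :: "nat \<Rightarrow> (nat \<Rightarrow> nat \<Rightarrow> int) \<Rightarrow> ipoly set ring" where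
  "Hcoh n A = polyR n Quot bott_ideal n A"

definition cls :: "nat \<Rightarrow> (nat \<Rightarrow> nat \<Rightarrow> int) \<Rightarrow> ipoly \<Rightarrow> ipoly set" where
  "cls n A f = bott_ideal n A +>\<^bsub>polyR n\<^esub> f"

definition homog :: "nat \<Rightarrow> ipoly \<Rightarrow> bool" where
  "homog k f \<longleftrightarrow> (\<forall>m\<in>Poly_Mapping.keys f. (\<Sum>i\<in>Poly_Mapping.keys m. Poly_Mapping.lookup m i) = k)"

text \<open>Hdeg n A k = H^{2k}(M(A);Z) (x_j has cohomological degree 2).\<close>
definition Hdeg :: "nat \<Rightarrow> (nat \<Rightarrow> nat \<Rightarrow> int) \<Rightarrow> nat \<Rightarrow> ipoly set set" where
  "Hdeg n A k = {cls n A f | f. f \<in> carrier (polyR n) \<and> homog k f}"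

definition graded_ring_iso ::
  "nat \<Rightarrow> (nat \<Rightarrow> nat \<Rightarrow> int) \<Rightarrow> (nat \<Rightarrow> nat \<Rightarrow> int) \<Rightarrow> (ipoly set \<Rightarrow> ipoly set) \<Rightarrow> bool" where
  "graded_ring_iso n A B \<psi> \<longleftrightarrow>
     \<psi> \<in> ring_iso (Hcoh n A) (Hcoh n B) \<and> (\<forall>k. \<psi> ` Hdeg n A k = Hdeg n B k)"

text \<open>alpha^A_j = 0 mod 2 in H^2(M(A);Z) with basis x_1..x_n.\<close>
definition alpha_even :: "(nat \<Rightarrow> nat \<Rightarrow> int) \<Rightarrow> nat \<Rightarrow> bool" where
  "alpha_even A j \<longleftrightarrow> (\<forall>i. even (A i j))"

text \<open>Coefficient of x_k in y^A_j = x_j - alpha^A_j / 2 in H^2(M(A);Q).\<close>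
definition ycoef :: "(nat \<Rightarrow> nat \<Rightarrow> int) \<Rightarrow> nat \<Rightarrow> nat \<Rightarrow> rat" where
  "ycoef A j k = (if k = j then 1 else 0) - of_int (A k j) / 2"

text \<open>Total Pontrjagin class of M(A), via the formula p(M(A)) = prod_j (1 + (alpha^A_j)^2).\<close>
definition pontr :: "nat \<Rightarrow> (nat \<Rightarrow> nat \<Rightarrow> int) \<Rightarrow> ipoly set" where
  "pontr n A = cls n A (\<Prod>j\<in>{1..n}. 1 + alphaP A j ^ 2)"

end

theory Submission
  imports Defs
begin

definition mdeg :: "(nat \<Rightarrow>\<^sub>0 nat) \<Rightarrow> nat" where
  "mdeg m = (\<Sum>i\<in>Poly_Mapping.keys m. Poly_Mapping.lookup m i)"

lemma carrier_polyR: "carrier (polyR n) = {p::ipoly. \<forall>m\<in>Poly_Mapping.keys p. Poly_Mapping.keys m \<subseteq> {1..n}}"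
  by (simp add: polyR_def)
lemma polyR_simps[simp]: "monoid.mult (polyR n) = (*)" "one (polyR n) = 1" "zero (polyR n) = 0" "add (polyR n) = (+)"
  by (simp_all add: polyR_def)

lemma keys_plus_monom: "Poly_Mapping.keys ((a::nat\<Rightarrow>\<^sub>0nat) + b) = Poly_Mapping.keys a \<union> Poly_Mapping.keys b"
  by (auto simp: in_keys_iff lookup_add)

lemma keys_add_ip: "m \<in> Poly_Mapping.keys ((p::ipoly) + q) \<Longrightarrow> m \<in> Poly_Mapping.keys p \<or> m \<in> Poly_Mapping.keys q"
  using keys_add[of p q] by auto
lemma keys_mult_ip: "m \<in> Poly_Mapping.keys ((p::ipoly) * q) \<Longrightarrow> \<exists>a b. m = a + b \<and> a \<in> Poly_Mapping.keys p \<and> b \<in> Poly_Mapping.keys q"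
  using keys_mult[of p q] by auto

lemma car_add: "p \<in> carrier (polyR n) \<Longrightarrow> q \<in> carrier (polyR n) \<Longrightarrow> p + q \<in> carrier (polyR n)"
  unfolding carrier_polyR mem_Collect_eq by (metis keys_add_ip)
lemma car_uminus: "p \<in> carrier (polyR n) \<Longrightarrow> - p \<in> carrier (polyR n)"
  unfolding carrier_polyR by simp
lemma car_diff: "p \<in> carrier (polyR n) \<Longrightarrow> q \<in> carrier (polyR n) \<Longrightarrow> p - q \<in> carrier (polyR n)"
  using car_add[of p n "-q"] car_uminus by simp
lemma car_mult: "p \<in> carrier (polyR n) \<Longrightarrow> q \<in> carrier (polyR n) \<Longrightarrow> p * q \<in> carrier (polyR n)"
  unfolding carrier_polyR mem_Collect_eq
proof
  fix m assume a: "\<forall>m\<in>Poly_Mapping.keys p. Poly_Mapping.keys m \<subseteq> {1..n}"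
    "\<forall>m\<in>Poly_Mapping.keys q. Poly_Mapping.keys m \<subseteq> {1..n}" and m: "m \<in> Poly_Mapping.keys (p * q)"
  obtain u v where "m = u + v" "u \<in> Poly_Mapping.keys p" "v \<in> Poly_Mapping.keys q"
    using keys_mult_ip[OF m] by blast
  then show "Poly_Mapping.keys m \<subseteq> {1..n}" using a by (simp add: keys_plus_monom)
qed
lemma of_int_ipoly: "(of_int a :: ipoly) = Poly_Mapping.single 0 a"
proof -
  have e: "(of_int a::int) = a" by simp
  have "Poly_Mapping.single 0 (of_int a :: int) = (of_int a :: ipoly)" by (rule single_of_int)
  then show ?thesis unfolding e by (rule sym)
qed
lemma car_of_int: "of_int a \<in> carrier (polyR n)"
  unfolding carrier_polyR of_int_ipoly by simp
lemma car_zero: "0 \<in> carrier (polyR n)" and car_one: "1 \<in> carrier (polyR n)"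
  unfolding carrier_polyR by auto
lemma car_Xv: "i \<in> {1..n} \<Longrightarrow> Xv i \<in> carrier (polyR n)"
  unfolding carrier_polyR Xv_def by simp
lemma car_sum: "(\<And>i. i \<in> S \<Longrightarrow> f i \<in> carrier (polyR n)) \<Longrightarrow> sum f S \<in> carrier (polyR n)"
  by (induction S rule: infinite_finite_induct) (auto simp: car_zero car_add)
lemma car_prod: "(\<And>i. i \<in> S \<Longrightarrow> f i \<in> carrier (polyR n)) \<Longrightarrow> prod f S \<in> carrier (polyR n)"
  by (induction S rule: infinite_finite_induct) (auto simp: car_one car_mult)

lemma cring_polyR: "cring (polyR n)"
proof (rule cringI)
  show "abelian_group (polyR n)"
  proof (rule abelian_groupI)
    fix x assume "x \<in> carrier (polyR n)"
    then show "\<exists>y\<in>carrier (polyR n). y \<oplus>\<^bsub>polyR n\<^esub> x = \<zero>\<^bsub>polyR n\<^esub>"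
      by (intro bexI[of _ "- x"]) (auto simp: car_uminus)
  qed (auto simp: car_add car_zero add.assoc add.commute)
  show "comm_monoid (polyR n)"
    by (rule comm_monoidI) (auto simp: car_mult car_one mult.assoc mult.commute)
qed (auto simp: distrib_right)

lemma ring_polyR: "ring (polyR n)"
  using cring_polyR cring.axioms(1) by blast

lemma a_inv_polyR: "p \<in> carrier (polyR n) \<Longrightarrow> a_inv (polyR n) p = - p"
  using abelian_group.minus_equality[of "polyR n" "-p" p] ring_polyR car_uminus
  by (simp add: ring.is_abelian_group)

lemma a_minus_polyR: "p \<in> carrier (polyR n) \<Longrightarrow> q \<in> carrier (polyR n) \<Longrightarrow> a_minus (polyR n) p q = p - q"
  by (simp add: a_minus_def a_inv_polyR)

lemma deg_eq: "finite S \<Longrightarrow> Poly_Mapping.keys m \<subseteq> S \<Longrightarrow> mdeg m = (\<Sum>i\<in>S. Poly_Mapping.lookup m i)"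
  unfolding mdeg_def by (rule sum.mono_neutral_left) (auto simp: in_keys_iff)

lemma deg_add: "mdeg (a + b) = mdeg a + mdeg b"
proof -
  let ?S = "Poly_Mapping.keys a \<union> Poly_Mapping.keys b"
  have "mdeg (a+b) = (\<Sum>i\<in>?S. Poly_Mapping.lookup (a+b) i)"
    by (rule deg_eq) (auto simp: keys_plus_monom)
  also have "\<dots> = (\<Sum>i\<in>?S. Poly_Mapping.lookup a i) + (\<Sum>i\<in>?S. Poly_Mapping.lookup b i)"
    by (simp add: lookup_add sum.distrib)
  finally have e: "mdeg (a+b) = (\<Sum>i\<in>?S. Poly_Mapping.lookup a i) + (\<Sum>i\<in>?S. Poly_Mapping.lookup b i)" .
  have "mdeg a = (\<Sum>i\<in>?S. Poly_Mapping.lookup a i)" by (rule deg_eq) auto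
  moreover have "mdeg b = (\<Sum>i\<in>?S. Poly_Mapping.lookup b i)" by (rule deg_eq) auto
  ultimately show ?thesis using e by simp
qed

lemma deg_single: "mdeg (Poly_Mapping.single i 1) = 1" "mdeg (Poly_Mapping.single i (Suc 0)) = Suc 0"
  unfolding mdeg_def by simp_all

lemma homog_deg: "homog k f \<longleftrightarrow> (\<forall>m\<in>Poly_Mapping.keys f. mdeg m = k)"
  by (simp add: homog_def mdeg_def)

lemma homog_zero: "homog k 0" by (simp add: homog_deg)
lemma homog_add: "homog k f \<Longrightarrow> homog k g \<Longrightarrow> homog k (f + g)"
  unfolding homog_deg by (metis keys_add_ip)
lemma homog_uminus: "homog k f \<Longrightarrow> homog k (- f)"
  unfolding homog_deg by simp
lemma homog_diff: "homog k f \<Longrightarrow> homog k g \<Longrightarrow> homog k (f - g)"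
  using homog_add[of k f "-g"] homog_uminus by simp
lemma homog_sum: "(\<And>i. i \<in> S \<Longrightarrow> homog k (f i)) \<Longrightarrow> homog k (sum f S)"
  by (induction S rule: infinite_finite_induct) (auto simp: homog_zero homog_add)
lemma homog_mult: "homog k f \<Longrightarrow> homog l g \<Longrightarrow> homog (k + l) (f * g)"
  unfolding homog_deg
proof
  fix m assume a: "\<forall>m\<in>Poly_Mapping.keys f. mdeg m = k" "\<forall>m\<in>Poly_Mapping.keys g. mdeg m = l"
    and m: "m \<in> Poly_Mapping.keys (f * g)"
  obtain u v where "m = u + v" "u \<in> Poly_Mapping.keys f" "v \<in> Poly_Mapping.keys g"
    using keys_mult_ip[OF m] by blast
  then show "mdeg m = k + l" using a by (simp add: deg_add)
qed
lemma homog_Xv: "homog 1 (Xv i)"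
  by (simp add: homog_deg Xv_def deg_single)
lemma homog_of_int: "homog 0 (of_int a)"
  by (simp add: homog_deg of_int_ipoly mdeg_def)
lemma homog_smult: "homog k f \<Longrightarrow> homog k (of_int a * f)"
  using homog_mult[OF homog_of_int, of k f a] by simp

lemma car_alphaP: "j \<le> n \<Longrightarrow> alphaP A j \<in> carrier (polyR n)"
  unfolding alphaP_def by (intro car_sum car_mult car_of_int car_Xv) auto
lemma homog_alphaP: "homog 1 (alphaP A j)"
  unfolding alphaP_def by (intro homog_sum homog_smult homog_Xv)

lemma gens_car: "{Xv j * Xv j - alphaP A j * Xv j | j. j \<in> {1..n}} \<subseteq> carrier (polyR n)"
  by (auto intro!: car_diff car_mult car_Xv car_alphaP)

lemma ideal_I: "ideal (bott_ideal n A) (polyR n)"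
  unfolding bott_ideal_def by (rule ring.genideal_ideal[OF ring_polyR gens_car])

lemma gen_in_I: "j \<in> {1..n} \<Longrightarrow> Xv j * Xv j - alphaP A j * Xv j \<in> bott_ideal n A"
  unfolding bott_ideal_def using ring.genideal_self[OF ring_polyR gens_car[of A n]] by blast

definition Jhi :: "nat \<Rightarrow> ipoly set" where
  "Jhi n = {p \<in> carrier (polyR n). \<forall>m\<in>Poly_Mapping.keys p. 2 \<le> mdeg m}"

lemma Jhi_add: "x \<in> Jhi n \<Longrightarrow> y \<in> Jhi n \<Longrightarrow> x + y \<in> Jhi n"
  unfolding Jhi_def using car_add keys_add_ip by blast
lemma Jhi_uminus: "x \<in> Jhi n \<Longrightarrow> - x \<in> Jhi n"
  unfolding Jhi_def using car_uminus by simp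
lemma Jhi_mult: "x \<in> carrier (polyR n) \<Longrightarrow> a \<in> Jhi n \<Longrightarrow> x * a \<in> Jhi n"
  unfolding Jhi_def mem_Collect_eq
proof (intro conjI ballI)
  assume x: "x \<in> carrier (polyR n)" and a: "a \<in> carrier (polyR n) \<and> (\<forall>m\<in>Poly_Mapping.keys a. 2 \<le> mdeg m)"
  then show "x * a \<in> carrier (polyR n)" using car_mult by blast
  fix m assume m: "m \<in> Poly_Mapping.keys (x * a)"
  obtain u v where "m = u + v" "u \<in> Poly_Mapping.keys x" "v \<in> Poly_Mapping.keys a"
    using keys_mult_ip[OF m] by blast
  moreover have "2 \<le> mdeg v" using a calculation(3) by blast
  ultimately show "2 \<le> mdeg m" by (simp add: deg_add)
qed

lemma ideal_Jhi: "ideal (Jhi n) (polyR n)"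
proof (intro subgroup.intro idealI[OF ring_polyR])
  show "Jhi n \<subseteq> carrier (add_monoid (polyR n))" by (auto simp: Jhi_def)
  show "\<And>x y. x \<in> Jhi n \<Longrightarrow> y \<in> Jhi n \<Longrightarrow> x \<otimes>\<^bsub>add_monoid (polyR n)\<^esub> y \<in> Jhi n"
    by (simp add: Jhi_add)
  show "\<one>\<^bsub>add_monoid (polyR n)\<^esub> \<in> Jhi n" by (simp add: Jhi_def car_zero)
  show "\<And>x. x \<in> Jhi n \<Longrightarrow> inv\<^bsub>add_monoid (polyR n)\<^esub> x \<in> Jhi n"
  proof -
    fix x assume x: "x \<in> Jhi n"
    then have "x \<in> carrier (polyR n)" by (simp add: Jhi_def)
    then have "inv\<^bsub>add_monoid (polyR n)\<^esub> x = - x" using a_inv_polyR by (simp add: a_inv_def)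
    then show "inv\<^bsub>add_monoid (polyR n)\<^esub> x \<in> Jhi n" using Jhi_uminus x by simp
  qed
  show "\<And>a x. a \<in> Jhi n \<Longrightarrow> x \<in> carrier (polyR n) \<Longrightarrow> x \<otimes>\<^bsub>polyR n\<^esub> a \<in> Jhi n"
    by (simp add: Jhi_mult)
  show "\<And>a x. a \<in> Jhi n \<Longrightarrow> x \<in> carrier (polyR n) \<Longrightarrow> a \<otimes>\<^bsub>polyR n\<^esub> x \<in> Jhi n"
    by (metis Jhi_mult mult.commute polyR_simps(1))
qed

lemma I_sub_Jhi: "bott_ideal n A \<subseteq> Jhi n"
  unfolding bott_ideal_def
proof (rule ring.genideal_minimal[OF ring_polyR ideal_Jhi])
  show "{Xv j * Xv j - alphaP A j * Xv j | j. j \<in> {1..n}} \<subseteq> Jhi n"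
  proof
    fix p assume "p \<in> {Xv j * Xv j - alphaP A j * Xv j | j. j \<in> {1..n}}"
    then obtain j where j: "j \<in> {1..n}" and p: "p = Xv j * Xv j - alphaP A j * Xv j" by blast
    have "homog (1+1) p" unfolding p by (intro homog_diff homog_mult homog_Xv homog_alphaP)
    moreover have "p \<in> carrier (polyR n)" using gens_car j p by blast
    ultimately show "p \<in> Jhi n" by (simp add: Jhi_def homog_deg)
  qed
qed

lemma cls_eq_coset: "cls n A = a_r_coset (polyR n) (bott_ideal n A)"
  by (rule ext) (simp add: cls_def)

lemma cls_hom: "cls n A \<in> ring_hom (polyR n) (Hcoh n A)"
proof -
  interpret ideal "bott_ideal n A" "polyR n" by (rule ideal_I)
  show ?thesis unfolding cls_eq_coset Hcoh_def by (rule rcos_ring_hom)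
qed

lemma ring_Hcoh: "ring (Hcoh n A)"
proof -
  interpret ideal "bott_ideal n A" "polyR n" by (rule ideal_I)
  show ?thesis unfolding Hcoh_def by (rule quotient_is_ring)
qed

lemma cls_eq: "f \<in> carrier (polyR n) \<Longrightarrow> g \<in> carrier (polyR n) \<Longrightarrow>
    cls n A f = cls n A g \<longleftrightarrow> f - g \<in> bott_ideal n A"
  using ring.quotient_eq_iff_same_a_r_cos[OF ring_polyR ideal_I, of f n g A]
  by (simp add: a_minus_polyR cls_def)

lemma cls_inj_lin: assumes "f \<in> carrier (polyR n)" "g \<in> carrier (polyR n)" "homog 1 f" "homog 1 g"
  "cls n A f = cls n A g" shows "f = g"
proof -
  have "f - g \<in> Jhi n" using cls_eq[OF assms(1,2)] assms(5) I_sub_Jhi by blast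
  moreover have "homog 1 (f - g)" using assms(3,4) by (rule homog_diff)
  ultimately have "Poly_Mapping.keys (f - g) = {}" by (force simp: Jhi_def homog_deg)
  then show ?thesis by simp
qed

lemma hom_of_int_eq:
  assumes h1: "h1 \<in> ring_hom (polyR n) S" and h2: "h2 \<in> ring_hom (polyR n) S" and S: "ring S"
  shows "h1 (of_int a) = h2 (of_int a)"
proof -
  interpret S: ring S by (rule S)
  have c1: "h1 (of_int i) \<in> carrier S" for i using ring_hom_closed[OF h1 car_of_int] .
  have c2: "h2 (of_int i) \<in> carrier S" for i using ring_hom_closed[OF h2 car_of_int] .
  have s1: "h (of_int (i+1)) = h (of_int i) \<oplus>\<^bsub>S\<^esub> \<one>\<^bsub>S\<^esub>" if h: "h \<in> ring_hom (polyR n) S" for h i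
  proof -
    have "h (of_int (i+1)) = h (of_int i \<oplus>\<^bsub>polyR n\<^esub> \<one>\<^bsub>polyR n\<^esub>)" by simp
    also have "\<dots> = h (of_int i) \<oplus>\<^bsub>S\<^esub> h \<one>\<^bsub>polyR n\<^esub>"
      by (rule ring_hom_add[OF h car_of_int]) (simp add: car_one)
    finally show ?thesis using ring_hom_one[OF h] by simp
  qed
  show ?thesis
  proof (induction a rule: int_induct[where k=0])
    case base
    have "h1 (of_int 0) = \<zero>\<^bsub>S\<^esub>" using ring_hom_zero[OF h1 ring_polyR S] by simp
    moreover have "h2 (of_int 0) = \<zero>\<^bsub>S\<^esub>" using ring_hom_zero[OF h2 ring_polyR S] by simp
    ultimately show ?case by simp
  next
    case (step1 i)
    then show ?case using s1[OF h1, of i] s1[OF h2, of i] by simp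
  next
    case (step2 i)
    have "h1 (of_int (i - 1)) \<oplus>\<^bsub>S\<^esub> \<one>\<^bsub>S\<^esub> = h2 (of_int (i - 1)) \<oplus>\<^bsub>S\<^esub> \<one>\<^bsub>S\<^esub>"
      using s1[OF h1, of "i-1"] s1[OF h2, of "i-1"] step2 by simp
    then show ?case using S.add.right_cancel[OF S.one_closed c1[of "i-1"] c2[of "i-1"]] by blast
  qed
qed

definition lin :: "nat \<Rightarrow> (nat \<Rightarrow> int) \<Rightarrow> ipoly" where
  "lin n v = (\<Sum>i\<in>{1..n}. of_int (v i) * Xv i)"

lemma lin_car: "lin n v \<in> carrier (polyR n)"
  unfolding lin_def by (intro car_sum car_mult car_of_int car_Xv) auto
lemma lin_homog: "homog 1 (lin n v)"
  unfolding lin_def by (intro homog_sum homog_smult homog_Xv)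

lemma smult_Xv: "of_int a * Xv i = Poly_Mapping.single (Poly_Mapping.single i 1) a"
  by (simp add: of_int_ipoly Xv_def mult_single)

lemma single1_eq: "Poly_Mapping.single i (1::nat) = Poly_Mapping.single k 1 \<longleftrightarrow> i = k"
proof
  assume "Poly_Mapping.single i (1::nat) = Poly_Mapping.single k 1"
  then have "Poly_Mapping.lookup (Poly_Mapping.single i (1::nat)) i = Poly_Mapping.lookup (Poly_Mapping.single k 1) i" by simp
  then show "i = k" by (simp add: lookup_single when_def split: if_splits)
qed simp

lemma single1_eq': "Poly_Mapping.single i (Suc 0) = Poly_Mapping.single k (Suc 0) \<longleftrightarrow> i = k"
  using single1_eq by simp

lemma lookup_lin: "Poly_Mapping.lookup (lin n v) m = (\<Sum>i\<in>{1..n}. (v i when Poly_Mapping.single i 1 = m))"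
  unfolding lin_def by (simp add: lookup_sum smult_Xv lookup_single)

lemma lin_coef: "k \<in> {1..n} \<Longrightarrow> Poly_Mapping.lookup (lin n v) (Poly_Mapping.single k 1) = v k"
proof -
  assume k: "k \<in> {1..n}"
  have "Poly_Mapping.lookup (lin n v) (Poly_Mapping.single k 1) = (\<Sum>i\<in>{1..n}. if i = k then v i else 0)"
    unfolding lookup_lin by (intro sum.cong) (auto simp: single1_eq single1_eq' when_def)
  also have "\<dots> = v k" using k by simp
  finally show ?thesis .
qed

lemma lin_inj: "lin n v = lin n w \<Longrightarrow> i \<in> {1..n} \<Longrightarrow> v i = w i"
  by (metis lin_coef)

lemma mdeg1: assumes "mdeg m = 1" shows "\<exists>i. m = Poly_Mapping.single i 1 \<and> i \<in> Poly_Mapping.keys m"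
proof -
  have "Poly_Mapping.keys m \<noteq> {}" using assms by (auto simp: mdeg_def)
  then obtain i where i: "i \<in> Poly_Mapping.keys m" by blast
  have fin: "finite (Poly_Mapping.keys m)" by simp
  have "mdeg m = Poly_Mapping.lookup m i + (\<Sum>j\<in>Poly_Mapping.keys m - {i}. Poly_Mapping.lookup m j)"
    unfolding mdeg_def using sum.remove[OF fin i] by simp
  moreover have "Poly_Mapping.lookup m i \<noteq> 0" using i by (simp add: in_keys_iff)
  ultimately have z: "(\<Sum>j\<in>Poly_Mapping.keys m - {i}. Poly_Mapping.lookup m j) = 0" and o: "Poly_Mapping.lookup m i = 1"
    using assms by linarith+
  have "Poly_Mapping.lookup m j = (1 when i = j)" for j
  proof (cases "j = i")
    case True then show ?thesis using o by simp
  next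
    case False
    show ?thesis
    proof (cases "j \<in> Poly_Mapping.keys m")
      case True
      then have "Poly_Mapping.lookup m j = 0" using z False by (simp add: sum_eq_0_iff)
      then show ?thesis using False by simp
    next
      case F: False
      then show ?thesis using False by (simp add: in_keys_iff)
    qed
  qed
  then have "m = Poly_Mapping.single i 1" by (intro poly_mapping_eqI) (simp add: lookup_single)
  then show ?thesis using i by blast
qed

lemma linform: assumes "f \<in> carrier (polyR n)" "homog 1 f"
  shows "f = lin n (\<lambda>i. Poly_Mapping.lookup f (Poly_Mapping.single i 1))"
proof (rule poly_mapping_eqI)
  fix m
  have "Poly_Mapping.lookup (lin n (\<lambda>i. Poly_Mapping.lookup f (Poly_Mapping.single i 1))) m
      = (\<Sum>i\<in>{1..n}. (Poly_Mapping.lookup f m when Poly_Mapping.single i 1 = m))"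
    unfolding lookup_lin by (intro sum.cong) (auto simp: when_def)
  also have "\<dots> = Poly_Mapping.lookup f m"
  proof (cases "m \<in> Poly_Mapping.keys f")
    case True
    then have "mdeg m = 1" using assms(2) by (simp add: homog_deg)
    then obtain i where i: "m = Poly_Mapping.single i 1" "i \<in> Poly_Mapping.keys m" using mdeg1 by blast
    have "Poly_Mapping.keys m \<subseteq> {1..n}" using assms(1) True by (simp add: carrier_polyR)
    then have "i \<in> {1..n}" using i(2) by blast
    then show ?thesis unfolding i(1) by (simp add: single1_eq single1_eq' when_def)
  next
    case False
    then show ?thesis by (simp add: in_keys_iff when_def)
  qed
  finally show "Poly_Mapping.lookup f m = Poly_Mapping.lookup (lin n (\<lambda>i. Poly_Mapping.lookup f (Poly_Mapping.single i 1))) m"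
    by simp
qed

lemma LIN:
  assumes psi: "\<psi> \<in> ring_hom (Hcoh n A) (Hcoh n B)"
    and X: "\<forall>i\<in>{1..n}. \<psi> (cls n A (Xv i)) = cls n B (\<Sum>k\<in>{1..n}. of_int (c i k) * Xv k)"
  shows "\<psi> (cls n A (lin n v)) = cls n B (lin n (\<lambda>k. \<Sum>i\<in>{1..n}. v i * c i k))"
proof -
  define Y where "Y i = (\<Sum>k\<in>{1..n}. of_int (c i k) * Xv k)" for i
  have Ycar: "Y i \<in> carrier (polyR n)" for i unfolding Y_def by (intro car_sum car_mult car_of_int car_Xv) auto
  have H: "\<psi> \<circ> cls n A \<in> ring_hom (polyR n) (Hcoh n B)" by (rule ring_hom_trans[OF cls_hom psi])
  have G: "cls n B \<in> ring_hom (polyR n) (Hcoh n B)" by (rule cls_hom)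
  have step: "S \<subseteq> {1..n} \<Longrightarrow> (\<psi> \<circ> cls n A) (\<Sum>i\<in>S. of_int (v i) * Xv i) = cls n B (\<Sum>i\<in>S. of_int (v i) * Y i)" for S
  proof (induction S rule: infinite_finite_induct)
    case (infinite S) then show ?case using finite_subset[of S "{1..n}"] by simp
  next
    case empty
    show ?case using ring_hom_zero[OF H ring_polyR ring_Hcoh] ring_hom_zero[OF G ring_polyR ring_Hcoh] by simp
  next
    case (insert x F)
    then have x: "x \<in> {1..n}" and F: "F \<subseteq> {1..n}" by auto
    have c1: "of_int (v x) * Xv x \<in> carrier (polyR n)" using x by (intro car_mult car_of_int car_Xv)
    have c2: "(\<Sum>i\<in>F. of_int (v i) * Xv i) \<in> carrier (polyR n)" using F by (intro car_sum car_mult car_of_int car_Xv) auto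
    have c3: "of_int (v x) * Y x \<in> carrier (polyR n)" by (intro car_mult car_of_int Ycar)
    have c4: "(\<Sum>i\<in>F. of_int (v i) * Y i) \<in> carrier (polyR n)" by (intro car_sum car_mult car_of_int Ycar)
    have e1: "(\<psi> \<circ> cls n A) (of_int (v x) * Xv x) = cls n B (of_int (v x) * Y x)"
    proof -
      have "(\<psi> \<circ> cls n A) (of_int (v x) * Xv x) = (\<psi> \<circ> cls n A) (of_int (v x)) \<otimes>\<^bsub>Hcoh n B\<^esub> (\<psi> \<circ> cls n A) (Xv x)"
        using ring_hom_mult[OF H car_of_int car_Xv[OF x]] by simp
      also have "(\<psi> \<circ> cls n A) (of_int (v x)) = cls n B (of_int (v x))"
        by (rule hom_of_int_eq[OF H G ring_Hcoh])
      also have "(\<psi> \<circ> cls n A) (Xv x) = cls n B (Y x)" using X x by (simp add: Y_def)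
      also have "cls n B (of_int (v x)) \<otimes>\<^bsub>Hcoh n B\<^esub> cls n B (Y x) = cls n B (of_int (v x) * Y x)"
        using ring_hom_mult[OF G car_of_int Ycar] by simp
      finally show ?thesis .
    qed
    have "(\<psi> \<circ> cls n A) (\<Sum>i\<in>insert x F. of_int (v i) * Xv i)
        = (\<psi> \<circ> cls n A) (of_int (v x) * Xv x + (\<Sum>i\<in>F. of_int (v i) * Xv i))"
      using insert by simp
    also have "\<dots> = (\<psi> \<circ> cls n A) (of_int (v x) * Xv x) \<oplus>\<^bsub>Hcoh n B\<^esub> (\<psi> \<circ> cls n A) (\<Sum>i\<in>F. of_int (v i) * Xv i)"
      using ring_hom_add[OF H c1 c2] by simp
    also have "\<dots> = cls n B (of_int (v x) * Y x) \<oplus>\<^bsub>Hcoh n B\<^esub> cls n B (\<Sum>i\<in>F. of_int (v i) * Y i)"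
      using e1 insert F by simp
    also have "\<dots> = cls n B (of_int (v x) * Y x + (\<Sum>i\<in>F. of_int (v i) * Y i))"
      using ring_hom_add[OF G c3 c4] by simp
    also have "\<dots> = cls n B (\<Sum>i\<in>insert x F. of_int (v i) * Y i)" using insert by simp
    finally show ?case .
  qed
  have alg: "(\<Sum>i\<in>{1..n}. of_int (v i) * Y i) = lin n (\<lambda>k. \<Sum>i\<in>{1..n}. v i * c i k)"
    unfolding Y_def lin_def
    by (simp add: sum_distrib_left sum_distrib_right mult.assoc) (rule sum.swap)
  show ?thesis using step[of "{1..n}"] alg by (simp add: lin_def)
qed

lemma even_sum_prod: "(\<forall>i\<in>{1..n}. even (a i :: int)) \<Longrightarrow> even (\<Sum>i\<in>{1..n}. a i * c i k)"
  by (intro dvd_sum) simp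

lemma divisors4: assumes "(m::int) * w = 4" shows "m \<in> {1,-1,2,-2,4,-4}"
proof -
  have "m \<noteq> 0" using assms by auto
  have "w \<noteq> 0" using assms by auto
  have "\<bar>m\<bar> * \<bar>w\<bar> = 4" using assms by (metis abs_mult abs_numeral)
  moreover have "\<bar>m\<bar> * 1 \<le> \<bar>m\<bar> * \<bar>w\<bar>" using \<open>w \<noteq> 0\<close> by (intro mult_left_mono) auto
  ultimately have "\<bar>m\<bar> \<le> 4" by simp
  then have "m \<in> {-4..4}" by auto
  moreover have "m \<noteq> 3"
  proof
    assume "m = 3" with assms have "3 * w = (4::int)" by simp
    then show False by presburger
  qed
  moreover have "m \<noteq> -3"
  proof
    assume "m = -3" with assms have "-3 * w = (4::int)" by simp
    then show False by presburger
  qed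
  ultimately have "-4 \<le> m" "m \<le> 4" "m \<noteq> 3" "m \<noteq> -3" by auto
  then have "m = 1 \<or> m = -1 \<or> m = 2 \<or> m = -2 \<or> m = 4 \<or> m = -4" using \<open>m \<noteq> 0\<close> by presburger
  then show ?thesis by simp
qed

lemma core:
  fixes a b :: "nat \<Rightarrow> int" and c :: "nat \<Rightarrow> nat \<Rightarrow> int" and m :: int
  assumes j: "j \<in> {1..n}" and s: "s \<in> {1..n}" and aj: "a j = 2" and bs: "b s = 2"
    and R: "\<forall>k\<in>{1..n}. 2 * (\<Sum>i\<in>{1..n}. a i * c i k) = m * b k"
    and INJ: "\<And>v w. (\<forall>k\<in>{1..n}. (\<Sum>i\<in>{1..n}. v i * c i k) = (\<Sum>i\<in>{1..n}. w i * c i k)) \<Longrightarrow> \<forall>i\<in>{1..n}. v i = w i"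
    and SURJ: "\<And>u. \<exists>w. \<forall>k\<in>{1..n}. (\<Sum>i\<in>{1..n}. w i * c i k) = u k"
  shows "m \<in> {1,-1,2,-2,4,-4}"
    and "m \<in> {1,-1} \<longleftrightarrow> \<not> (\<forall>i\<in>{1..n}. even (a i)) \<and> (\<forall>k\<in>{1..n}. even (b k))"
    and "m \<in> {4,-4} \<longleftrightarrow> (\<forall>i\<in>{1..n}. even (a i)) \<and> \<not> (\<forall>k\<in>{1..n}. even (b k))"
proof -
  obtain w where w: "\<forall>k\<in>{1..n}. (\<Sum>i\<in>{1..n}. w i * c i k) = b k" using SURJ[of b] by blast
  have "\<forall>k\<in>{1..n}. (\<Sum>i\<in>{1..n}. (m * w i) * c i k) = (\<Sum>i\<in>{1..n}. (2 * a i) * c i k)"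
  proof
    fix k assume k: "k \<in> {1..n}"
    have "(\<Sum>i\<in>{1..n}. (m * w i) * c i k) = m * (\<Sum>i\<in>{1..n}. w i * c i k)"
      by (simp add: sum_distrib_left mult.assoc)
    also have "\<dots> = m * b k" using w k by simp
    also have "\<dots> = 2 * (\<Sum>i\<in>{1..n}. a i * c i k)" using R k by simp
    also have "\<dots> = (\<Sum>i\<in>{1..n}. (2 * a i) * c i k)" by (simp add: sum_distrib_left mult.assoc)
    finally show "(\<Sum>i\<in>{1..n}. (m * w i) * c i k) = (\<Sum>i\<in>{1..n}. (2 * a i) * c i k)" .
  qed
  from INJ[OF this] have mw: "\<forall>i\<in>{1..n}. m * w i = 2 * a i" .
  then have "m * w j = 4" using j aj by simp
  then show M: "m \<in> {1,-1,2,-2,4,-4}" by (rule divisors4)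
  have L1: "\<exists>w'. \<forall>i\<in>{1..n}. a i = m * w' i" if evb: "\<forall>k\<in>{1..n}. even (b k)"
  proof -
    obtain w' where w': "\<forall>k\<in>{1..n}. (\<Sum>i\<in>{1..n}. w' i * c i k) = b k div 2" using SURJ[of "\<lambda>k. b k div 2"] by blast
    have "\<forall>k\<in>{1..n}. (\<Sum>i\<in>{1..n}. a i * c i k) = (\<Sum>i\<in>{1..n}. (m * w' i) * c i k)"
    proof
      fix k assume k: "k \<in> {1..n}"
      have "2 * (\<Sum>i\<in>{1..n}. a i * c i k) = m * b k" using R k by simp
      also have "b k = 2 * (b k div 2)" using evb k by simp
      also have "m * (2 * (b k div 2)) = 2 * (m * (\<Sum>i\<in>{1..n}. w' i * c i k))"
        using w' k by simp
      also have "m * (\<Sum>i\<in>{1..n}. w' i * c i k) = (\<Sum>i\<in>{1..n}. (m * w' i) * c i k)"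
        by (simp add: sum_distrib_left mult.assoc)
      finally show "(\<Sum>i\<in>{1..n}. a i * c i k) = (\<Sum>i\<in>{1..n}. (m * w' i) * c i k)" by simp
    qed
    from INJ[OF this] show ?thesis by blast
  qed
  have Rs: "2 * (\<Sum>i\<in>{1..n}. a i * c i s) = 2 * m" using R s bs by simp
  then have ms: "(\<Sum>i\<in>{1..n}. a i * c i s) = m" by simp
  show "m \<in> {1,-1} \<longleftrightarrow> \<not> (\<forall>i\<in>{1..n}. even (a i)) \<and> (\<forall>k\<in>{1..n}. even (b k))"
  proof
    assume m1: "m \<in> {1,-1}"
    have "\<not> (\<forall>i\<in>{1..n}. even (a i))"
    proof
      assume "\<forall>i\<in>{1..n}. even (a i)"
      then have "even m" using even_sum_prod[of n a c s] ms by simp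
      then show False using m1 by auto
    qed
    moreover have "\<forall>k\<in>{1..n}. even (b k)"
    proof
      fix k assume k: "k \<in> {1..n}"
      have "2 * (\<Sum>i\<in>{1..n}. a i * c i k) = m * b k" using R k by simp
      then have "even (m * b k)" by (metis dvd_triv_left)
      then show "even (b k)" using m1 by auto
    qed
    ultimately show "\<not> (\<forall>i\<in>{1..n}. even (a i)) \<and> (\<forall>k\<in>{1..n}. even (b k))" by blast
  next
    assume h: "\<not> (\<forall>i\<in>{1..n}. even (a i)) \<and> (\<forall>k\<in>{1..n}. even (b k))"
    then obtain w' where w': "\<forall>i\<in>{1..n}. a i = m * w' i" using L1 by blast
    have "odd m"
    proof
      assume "even m"
      then have "\<forall>i\<in>{1..n}. even (a i)" using w' by auto
      then show False using h by blast
    qed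
    then show "m \<in> {1,-1}" using M by auto
  qed
  show "m \<in> {4,-4} \<longleftrightarrow> (\<forall>i\<in>{1..n}. even (a i)) \<and> \<not> (\<forall>k\<in>{1..n}. even (b k))"
  proof
    assume m4: "m \<in> {4,-4}"
    have "\<forall>i\<in>{1..n}. even (a i)"
    proof
      fix i assume i: "i \<in> {1..n}"
      then have "m * w i = 2 * a i" using mw by simp
      moreover have "m = 4 \<or> m = -4" using m4 by simp
      ultimately have "a i = 2 * w i \<or> a i = 2 * (- w i)" by (elim disjE) simp_all
      then show "even (a i)" by (metis dvd_triv_left)
    qed
    moreover have "\<not> (\<forall>k\<in>{1..n}. even (b k))"
    proof
      assume "\<forall>k\<in>{1..n}. even (b k)"
      then obtain w' where w': "\<forall>i\<in>{1..n}. a i = m * w' i" using L1 by blast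
      then have eq: "m * w' j = 2" using aj j by simp
      have "(4::int) dvd m" using m4 by auto
      then have "(4::int) dvd m * w' j" by (rule dvd_mult2)
      then show False unfolding eq by auto
    qed
    ultimately show "(\<forall>i\<in>{1..n}. even (a i)) \<and> \<not> (\<forall>k\<in>{1..n}. even (b k))" by blast
  next
    assume h: "(\<forall>i\<in>{1..n}. even (a i)) \<and> \<not> (\<forall>k\<in>{1..n}. even (b k))"
    then have "even m" using even_sum_prod[of n a c s] ms by simp
    moreover have "m \<notin> {2,-2}"
    proof
      assume m2: "m \<in> {2,-2}"
      have "\<forall>k\<in>{1..n}. even (b k)"
      proof
        fix k assume k: "k \<in> {1..n}"
        have e: "2 * (\<Sum>i\<in>{1..n}. a i * c i k) = m * b k" using R k by simp
        have "even (\<Sum>i\<in>{1..n}. a i * c i k)" using h even_sum_prod[of n a c k] by simp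
        then obtain t where t: "(\<Sum>i\<in>{1..n}. a i * c i k) = 2 * t" by (rule evenE)
        have "m = 2 \<or> m = -2" using m2 by simp
        then have "b k = 2 * t \<or> b k = 2 * (- t)" using e t by (elim disjE) simp_all
        then show "even (b k)" by (metis dvd_triv_left)
      qed
      then show False using h by blast
    qed
    ultimately show "m \<in> {4,-4}" using M by auto
  qed
qed

lemma psi_hom: "\<psi> \<in> ring_iso (Hcoh n A) (Hcoh n B) \<Longrightarrow> \<psi> \<in> ring_hom (Hcoh n A) (Hcoh n B)"
  by (simp add: ring_iso_def)

lemma lin_cong: "(\<forall>k\<in>{1..n}. u k = v k) \<Longrightarrow> lin n u = lin n v"
  unfolding lin_def by (intro sum.cong) auto

lemma INJ_lem:
  assumes psi: "\<psi> \<in> ring_iso (Hcoh n A) (Hcoh n B)"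
    and X: "\<forall>i\<in>{1..n}. \<psi> (cls n A (Xv i)) = cls n B (\<Sum>k\<in>{1..n}. of_int (c i k) * Xv k)"
    and h: "\<forall>k\<in>{1..n}. (\<Sum>i\<in>{1..n}. v i * c i k) = (\<Sum>i\<in>{1..n}. w i * c i k)"
  shows "\<forall>i\<in>{1..n}. v i = w i"
proof -
  have "\<psi> (cls n A (lin n v)) = \<psi> (cls n A (lin n w))"
    using LIN[OF psi_hom[OF psi] X, of v] LIN[OF psi_hom[OF psi] X, of w] lin_cong[OF h] by simp
  moreover have "inj_on \<psi> (carrier (Hcoh n A))" using psi by (simp add: ring_iso_def bij_betw_def)
  moreover have "cls n A (lin n v) \<in> carrier (Hcoh n A)" "cls n A (lin n w) \<in> carrier (Hcoh n A)"
    by (rule ring_hom_closed[OF cls_hom lin_car])+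
  ultimately have "cls n A (lin n v) = cls n A (lin n w)" by (meson inj_onD)
  then have e: "lin n v = lin n w" by (rule cls_inj_lin[OF lin_car lin_car lin_homog lin_homog])
  show ?thesis
  proof
    fix i assume "i \<in> {1..n}" then show "v i = w i" by (rule lin_inj[OF e])
  qed
qed

lemma SURJ_lem:
  assumes psi: "\<psi> \<in> ring_iso (Hcoh n A) (Hcoh n B)"
    and gr: "\<forall>k. \<psi> ` Hdeg n A k = Hdeg n B k"
    and X: "\<forall>i\<in>{1..n}. \<psi> (cls n A (Xv i)) = cls n B (\<Sum>k\<in>{1..n}. of_int (c i k) * Xv k)"
  shows "\<exists>w. \<forall>k\<in>{1..n}. (\<Sum>i\<in>{1..n}. w i * c i k) = u k"
proof -
  have "cls n B (lin n u) \<in> Hdeg n B 1" unfolding Hdeg_def using lin_car lin_homog by blast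
  then have "cls n B (lin n u) \<in> \<psi> ` Hdeg n A 1" using gr by simp
  then obtain h where h: "h \<in> Hdeg n A 1" "\<psi> h = cls n B (lin n u)" by blast
  then obtain f where f: "h = cls n A f" "f \<in> carrier (polyR n)" "homog 1 f" unfolding Hdeg_def by blast
  define w where "w i = Poly_Mapping.lookup f (Poly_Mapping.single i 1)" for i
  have "f = lin n w" unfolding w_def by (rule linform[OF f(2,3)])
  then have "cls n B (lin n (\<lambda>k. \<Sum>i\<in>{1..n}. w i * c i k)) = cls n B (lin n u)"
    using LIN[OF psi_hom[OF psi] X, of w] h f(1) by simp
  then have e: "lin n (\<lambda>k. \<Sum>i\<in>{1..n}. w i * c i k) = lin n u"
    by (rule cls_inj_lin[OF lin_car lin_car lin_homog lin_homog])
  have "\<forall>k\<in>{1..n}. (\<Sum>i\<in>{1..n}. w i * c i k) = u k"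
  proof
    fix k assume "k \<in> {1..n}" then show "(\<Sum>i\<in>{1..n}. w i * c i k) = u k" using lin_inj[OF e] by simp
  qed
  then show ?thesis by blast
qed

lemma key_sq:
  assumes j: "j \<in> {1..n}" and L: "L = 2 * Xv j - alphaP A j"
  shows "cls n A (1 + alphaP A j ^ 2) = cls n A (1 + L * L)"
proof -
  have gen: "Xv j * Xv j - alphaP A j * Xv j \<in> bott_ideal n A" using gen_in_I[OF j] .
  have "of_int (-4) \<otimes>\<^bsub>polyR n\<^esub> (Xv j * Xv j - alphaP A j * Xv j) \<in> bott_ideal n A"
    using ideal.I_l_closed[OF ideal_I gen car_of_int] .
  moreover have "(1 + alphaP A j ^ 2) - (1 + L * L) = of_int (-4) * (Xv j * Xv j - alphaP A j * Xv j)"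
    unfolding L by (simp add: algebra_simps power2_eq_square)
  ultimately have d: "(1 + alphaP A j ^ 2) - (1 + L * L) \<in> bott_ideal n A" by simp
  have c1: "1 + alphaP A j ^ 2 \<in> carrier (polyR n)" using j
    by (simp add: power2_eq_square car_add car_one car_mult car_alphaP)
  have c2: "1 + L * L \<in> carrier (polyR n)" unfolding L using j
    by (intro car_add car_one car_mult car_diff car_alphaP car_Xv) (auto simp: car_of_int[of 2, simplified])
  show ?thesis using cls_eq[OF c1 c2] d by simp
qed

lemma bott_zero: "A \<in> bott_mat n \<Longrightarrow> \<not> (1 \<le> i \<and> i < j \<and> j \<le> n) \<Longrightarrow> A i j = 0"
  unfolding bott_mat_def by blast

lemma lin_L:
  assumes A: "A \<in> bott_mat n" and j: "j \<in> {1..n}"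
  shows "lin n (\<lambda>i. (if i = j then 2 else 0) - A i j) = 2 * Xv j - alphaP A j"
proof -
  have "lin n (\<lambda>i. (if i = j then 2 else 0) - A i j)
      = (\<Sum>i\<in>{1..n}. (if i = j then 2 * Xv i else 0)) - (\<Sum>i\<in>{1..n}. of_int (A i j) * Xv i)"
  proof -
    have t: "\<And>i. of_int ((if i = j then 2 else 0) - A i j) * Xv i = (if i = j then 2 * Xv i else 0) - of_int (A i j) * Xv i"
      by (case_tac "i = j") (simp_all add: algebra_simps)
    show ?thesis unfolding lin_def by (simp only: t sum_subtractf)
  qed
  also have "(\<Sum>i\<in>{1..n}. (if i = j then 2 * Xv i else 0)) = 2 * Xv j" using j by simp
  also have "(\<Sum>i\<in>{1..n}. of_int (A i j) * Xv i) = alphaP A j"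
    unfolding alphaP_def
  proof (rule sum.mono_neutral_right)
    show "{1..<j} \<subseteq> {1..n}" using j by auto
    show "\<forall>i\<in>{1..n} - {1..<j}. of_int (A i j) * Xv i = 0" using bott_zero[OF A] by auto
  qed simp
  finally show ?thesis .
qed

lemma hom_sq:
  assumes H: "H \<in> ring_hom (polyR n) S" and G: "G \<in> ring_hom (polyR n) S"
    and p: "p \<in> carrier (polyR n)" and p': "p' \<in> carrier (polyR n)" and e: "H p = G p'"
  shows "H (1 + p * p) = G (1 + p' * p')"
proof -
  have "H (1 + p * p) = H 1 \<oplus>\<^bsub>S\<^esub> (H p \<otimes>\<^bsub>S\<^esub> H p)"
    using ring_hom_add[OF H car_one car_mult[OF p p]] ring_hom_mult[OF H p p] by simp
  also have "\<dots> = G 1 \<oplus>\<^bsub>S\<^esub> (G p' \<otimes>\<^bsub>S\<^esub> G p')"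
    using ring_hom_one[OF H] ring_hom_one[OF G] e by simp
  also have "\<dots> = G (1 + p' * p')"
    using ring_hom_add[OF G car_one car_mult[OF p' p']] ring_hom_mult[OF G p' p'] by simp
  finally show ?thesis .
qed

lemma hom_prod:
  assumes H: "H \<in> ring_hom (polyR n) S" and G: "G \<in> ring_hom (polyR n) S"
    and F: "\<forall>j\<in>T. P j \<in> carrier (polyR n) \<and> Q j \<in> carrier (polyR n) \<and> H (P j) = G (Q j)"
    and fin: "finite T"
  shows "H (\<Prod>j\<in>T. P j) = G (\<Prod>j\<in>T. Q j)"
  using fin F
proof (induction T rule: finite_induct)
  case empty
  then show ?case using ring_hom_one[OF H] ring_hom_one[OF G] by simp
next
  case (insert x T)
  have cP: "(\<Prod>j\<in>T. P j) \<in> carrier (polyR n)" using insert.prems by (intro car_prod) auto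
  have cQ: "(\<Prod>j\<in>T. Q j) \<in> carrier (polyR n)" using insert.prems by (intro car_prod) auto
  have x: "P x \<in> carrier (polyR n)" "Q x \<in> carrier (polyR n)" "H (P x) = G (Q x)" using insert.prems by auto
  have "H (\<Prod>j\<in>insert x T. P j) = H (P x * (\<Prod>j\<in>T. P j))" using insert.hyps by simp
  also have "\<dots> = H (P x) \<otimes>\<^bsub>S\<^esub> H (\<Prod>j\<in>T. P j)" using ring_hom_mult[OF H x(1) cP] by simp
  also have "H (\<Prod>j\<in>T. P j) = G (\<Prod>j\<in>T. Q j)" using insert.IH insert.prems by auto
  also have "H (P x) \<otimes>\<^bsub>S\<^esub> G (\<Prod>j\<in>T. Q j) = G (Q x * (\<Prod>j\<in>T. Q j))"
    using ring_hom_mult[OF G x(2) cQ] x(3) by simp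
  also have "\<dots> = G (\<Prod>j\<in>insert x T. Q j)" using insert.hyps by simp
  finally show ?case .
qed

lemma lin_smult: "lin n (\<lambda>k. t * v k) = of_int t * lin n v"
  unfolding lin_def by (simp add: sum_distrib_left mult.assoc)

lemma perj:
  fixes n :: nat and A B :: "nat \<Rightarrow> nat \<Rightarrow> int" and \<psi> :: "ipoly set \<Rightarrow> ipoly set"
    and c :: "nat \<Rightarrow> nat \<Rightarrow> int" and \<sigma> :: "nat \<Rightarrow> nat" and q :: "nat \<Rightarrow> rat"
  assumes A: "A \<in> bott_mat n" and B: "B \<in> bott_mat n"
    and Y: "\<forall>j\<in>{1..n}. \<forall>k\<in>{1..n}.
           (\<Sum>i\<in>{1..n}. ycoef A j i * of_int (c i k)) = q j * ycoef B (\<sigma> j) k"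
    and j: "j \<in> {1..n}" and sj: "\<sigma> j \<in> {1..n}"
  defines "a \<equiv> \<lambda>i. (if i = j then 2 else 0) - A i j"
    and "b \<equiv> \<lambda>k. (if k = \<sigma> j then 2 else 0) - B k (\<sigma> j)"
  shows "\<exists>m::int. q j = of_int m / 2 \<and> (\<forall>k\<in>{1..n}. 2 * (\<Sum>i\<in>{1..n}. a i * c i k) = m * b k)"
    and "a j = 2" and "b (\<sigma> j) = 2"
    and "alpha_even A j \<longleftrightarrow> (\<forall>i\<in>{1..n}. even (a i))"
    and "alpha_even B (\<sigma> j) \<longleftrightarrow> (\<forall>k\<in>{1..n}. even (b k))"
proof -
  have Ajj: "A j j = 0" by (rule bott_zero[OF A]) simp
  have Bss: "B (\<sigma> j) (\<sigma> j) = 0" by (rule bott_zero[OF B]) simp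
  show aj: "a j = 2" unfolding a_def using Ajj by simp
  show bs: "b (\<sigma> j) = 2" unfolding b_def using Bss by simp
  have ya: "2 * ycoef A j i = of_int (a i)" for i
    unfolding a_def ycoef_def by (cases "i = j") simp_all
  have yb: "2 * ycoef B (\<sigma> j) k = of_int (b k)" for k
    unfolding b_def ycoef_def by (cases "k = \<sigma> j") simp_all
  have rk: "of_int (\<Sum>i\<in>{1..n}. a i * c i k) = q j * of_int (b k)" if k: "k \<in> {1..n}" for k
  proof -
    have "of_int (\<Sum>i\<in>{1..n}. a i * c i k) = (\<Sum>i\<in>{1..n}. (2 * ycoef A j i) * of_int (c i k) :: rat)"
      by (simp add: ya)
    also have "\<dots> = 2 * (\<Sum>i\<in>{1..n}. ycoef A j i * of_int (c i k))"
      by (simp add: sum_distrib_left mult.assoc)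
    also have "\<dots> = 2 * (q j * ycoef B (\<sigma> j) k)" using Y j k by simp
    also have "\<dots> = q j * (2 * ycoef B (\<sigma> j) k)" by simp
    finally show ?thesis by (simp add: yb)
  qed
  define m where "m = (\<Sum>i\<in>{1..n}. a i * c i (\<sigma> j))"
  have "of_int m = q j * 2" using rk[OF sj] bs unfolding m_def by simp
  then have qm: "q j = of_int m / 2" by simp
  have "\<forall>k\<in>{1..n}. 2 * (\<Sum>i\<in>{1..n}. a i * c i k) = m * b k"
  proof
    fix k assume k: "k \<in> {1..n}"
    have "(of_int (2 * (\<Sum>i\<in>{1..n}. a i * c i k)) :: rat) = of_int (m * b k)"
      using rk[OF k] qm by simp
    then show "2 * (\<Sum>i\<in>{1..n}. a i * c i k) = m * b k" by (rule of_int_eq_iff[THEN iffD1])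
  qed
  then show "\<exists>m::int. q j = of_int m / 2 \<and> (\<forall>k\<in>{1..n}. 2 * (\<Sum>i\<in>{1..n}. a i * c i k) = m * b k)"
    using qm by blast
  show "alpha_even A j \<longleftrightarrow> (\<forall>i\<in>{1..n}. even (a i))"
  proof
    assume h: "alpha_even A j"
    show "\<forall>i\<in>{1..n}. even (a i)"
    proof
      fix i assume "i \<in> {1..n}"
      have "even (A i j)" using h by (simp add: alpha_even_def)
      then show "even (a i)" unfolding a_def by (cases "i = j") simp_all
    qed
  next
    assume h: "\<forall>i\<in>{1..n}. even (a i)"
    show "alpha_even A j" unfolding alpha_even_def
    proof
      fix i
      show "even (A i j)"
      proof (cases "i \<in> {1..n}")
        case True
        then have "even (a i)" using h by blast
        then show ?thesis unfolding a_def using Ajj by (cases "i = j") simp_all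
      next
        case False
        then have "A i j = 0" using j by (intro bott_zero[OF A]) auto
        then show ?thesis by simp
      qed
    qed
  qed
  show "alpha_even B (\<sigma> j) \<longleftrightarrow> (\<forall>k\<in>{1..n}. even (b k))"
  proof
    assume h: "alpha_even B (\<sigma> j)"
    show "\<forall>k\<in>{1..n}. even (b k)"
    proof
      fix i assume "i \<in> {1..n}"
      have "even (B i (\<sigma> j))" using h by (simp add: alpha_even_def)
      then show "even (b i)" unfolding b_def by (cases "i = \<sigma> j") simp_all
    qed
  next
    assume h: "\<forall>k\<in>{1..n}. even (b k)"
    show "alpha_even B (\<sigma> j)" unfolding alpha_even_def
    proof
      fix i
      show "even (B i (\<sigma> j))"
      proof (cases "i \<in> {1..n}")
        case True
        then have "even (b i)" using h by blast
        then show ?thesis unfolding b_def using Bss by (cases "i = \<sigma> j") simp_all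
      next
        case False
        then have "B i (\<sigma> j) = 0" using sj by (intro bott_zero[OF B]) auto
        then show ?thesis by simp
      qed
    qed
  qed
qed

theorem lemma4p2:
  fixes n :: nat and A B :: "nat \<Rightarrow> nat \<Rightarrow> int" and \<psi> :: "ipoly set \<Rightarrow> ipoly set"
    and c :: "nat \<Rightarrow> nat \<Rightarrow> int" and \<sigma> :: "nat \<Rightarrow> nat" and q :: "nat \<Rightarrow> rat"
  assumes "A \<in> bott_mat n" and "B \<in> bott_mat n"
    and "graded_ring_iso n A B \<psi>"
    and "\<forall>i\<in>{1..n}. \<psi> (cls n A (Xv i)) = cls n B (\<Sum>k\<in>{1..n}. of_int (c i k) * Xv k)"
    and "bij_betw \<sigma> {1..n} {1..n}"
    and "\<forall>j\<in>{1..n}. q j \<noteq> 0"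
    and "\<forall>j\<in>{1..n}. \<forall>k\<in>{1..n}.
           (\<Sum>i\<in>{1..n}. ycoef A j i * of_int (c i k)) = q j * ycoef B (\<sigma> j) k"
  shows "(\<forall>j\<in>{1..n}. q j \<in> {1/2, -1/2, 1, -1, 2, -2})
       \<and> (\<forall>j\<in>{1..n}. q j \<in> {1/2, -1/2} \<longleftrightarrow> \<not> alpha_even A j \<and> alpha_even B (\<sigma> j))
       \<and> (\<forall>j\<in>{1..n}. q j \<in> {2, -2} \<longleftrightarrow> alpha_even A j \<and> \<not> alpha_even B (\<sigma> j))
       \<and> ((\<forall>j\<in>{1..n}. q j \<in> {1, -1}) \<longrightarrow> \<psi> (pontr n A) = pontr n B)"
proof -
  note A = assms(1) and B = assms(2) and X = assms(4) and sig = assms(5) and Y = assms(7)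
  have psi: "\<psi> \<in> ring_iso (Hcoh n A) (Hcoh n B)" and gr: "\<forall>k. \<psi> ` Hdeg n A k = Hdeg n B k"
    using assms(3) by (simp_all add: graded_ring_iso_def)
  have INJ: "\<And>v w. (\<forall>k\<in>{1..n}. (\<Sum>i\<in>{1..n}. v i * c i k) = (\<Sum>i\<in>{1..n}. w i * c i k)) \<Longrightarrow> \<forall>i\<in>{1..n}. v i = w i"
    by (rule INJ_lem[OF psi X])
  have SURJ: "\<And>u. \<exists>w. \<forall>k\<in>{1..n}. (\<Sum>i\<in>{1..n}. w i * c i k) = u k"
    by (rule SURJ_lem[OF psi gr X])
  have sj: "\<sigma> j \<in> {1..n}" if "j \<in> {1..n}" for j using sig that by (meson bij_betwE)
  have main: "q j \<in> {1/2, -1/2, 1, -1, 2, -2}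
       \<and> (q j \<in> {1/2, -1/2} \<longleftrightarrow> \<not> alpha_even A j \<and> alpha_even B (\<sigma> j))
       \<and> (q j \<in> {2, -2} \<longleftrightarrow> alpha_even A j \<and> \<not> alpha_even B (\<sigma> j))" if j: "j \<in> {1..n}" for j
  proof -
    define a where "a = (\<lambda>i. (if i = j then 2 else 0) - A i j)"
    define b where "b = (\<lambda>k. (if k = \<sigma> j then 2 else 0) - B k (\<sigma> j))"
    have P: "\<exists>m::int. q j = of_int m / 2 \<and> (\<forall>k\<in>{1..n}. 2 * (\<Sum>i\<in>{1..n}. a i * c i k) = m * b k)"
      "a j = 2" "b (\<sigma> j) = 2"
      "alpha_even A j \<longleftrightarrow> (\<forall>i\<in>{1..n}. even (a i))"
      "alpha_even B (\<sigma> j) \<longleftrightarrow> (\<forall>k\<in>{1..n}. even (b k))"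
      using perj[OF A B Y j sj[OF j]] by (simp_all add: a_def b_def)
    obtain m where qm: "q j = of_int m / 2" and R: "\<forall>k\<in>{1..n}. 2 * (\<Sum>i\<in>{1..n}. a i * c i k) = m * b k"
      using P(1) by blast
    note C = core[OF j sj[OF j] P(2) P(3) R INJ SURJ]
    have e1: "q j \<in> {1/2, -1/2} \<longleftrightarrow> m \<in> {1,-1}" unfolding qm by auto
    have e2: "q j \<in> {2, -2} \<longleftrightarrow> m \<in> {4,-4}" unfolding qm by auto
    have e0: "q j \<in> {1/2, -1/2, 1, -1, 2, -2}" using C(1) unfolding qm by auto
    show ?thesis using e0 e1 e2 C(2) C(3) P(4) P(5) by blast
  qed
  have pont: "\<psi> (pontr n A) = pontr n B" if all1: "\<forall>j\<in>{1..n}. q j \<in> {1, -1}"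
  proof -
    define H where "H = \<psi> \<circ> cls n A"
    have Hh: "H \<in> ring_hom (polyR n) (Hcoh n B)" unfolding H_def by (rule ring_hom_trans[OF cls_hom psi_hom[OF psi]])
    have Gh: "cls n B \<in> ring_hom (polyR n) (Hcoh n B)" by (rule cls_hom)
    have F: "\<forall>j\<in>{1..n}. (1 + alphaP A j ^ 2) \<in> carrier (polyR n) \<and> (1 + alphaP B (\<sigma> j) ^ 2) \<in> carrier (polyR n)
              \<and> H (1 + alphaP A j ^ 2) = cls n B (1 + alphaP B (\<sigma> j) ^ 2)"
    proof
      fix j assume j: "j \<in> {1..n}"
      define a where "a = (\<lambda>i. (if i = j then 2 else 0) - A i j)"
      define b where "b = (\<lambda>k. (if k = \<sigma> j then 2 else 0) - B k (\<sigma> j))"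
      have P: "\<exists>m::int. q j = of_int m / 2 \<and> (\<forall>k\<in>{1..n}. 2 * (\<Sum>i\<in>{1..n}. a i * c i k) = m * b k)"
      "a j = 2" "b (\<sigma> j) = 2"
      "alpha_even A j \<longleftrightarrow> (\<forall>i\<in>{1..n}. even (a i))"
      "alpha_even B (\<sigma> j) \<longleftrightarrow> (\<forall>k\<in>{1..n}. even (b k))"
      using perj[OF A B Y j sj[OF j]] by (simp_all add: a_def b_def)
      obtain m where qm: "q j = of_int m / 2" and R: "\<forall>k\<in>{1..n}. 2 * (\<Sum>i\<in>{1..n}. a i * c i k) = m * b k"
        using P(1) by blast
      have "q j \<in> {1,-1}" using all1 j by blast
      then have "m = 2 \<or> m = -2" unfolding qm by auto
      then obtain t :: int where m2: "m = 2 * t" and t: "t * t = 1" by auto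
      have Rt: "\<forall>k\<in>{1..n}. (\<Sum>i\<in>{1..n}. a i * c i k) = t * b k" using R m2 by simp
      have c1: "1 + alphaP A j ^ 2 \<in> carrier (polyR n)" using j
        by (simp add: power2_eq_square car_add car_one car_mult car_alphaP)
      have c2: "1 + alphaP B (\<sigma> j) ^ 2 \<in> carrier (polyR n)" using sj[OF j]
        by (simp add: power2_eq_square car_add car_one car_mult car_alphaP)
      have LA: "lin n a = 2 * Xv j - alphaP A j" unfolding a_def by (rule lin_L[OF A j])
      have LB: "lin n b = 2 * Xv (\<sigma> j) - alphaP B (\<sigma> j)" unfolding b_def by (rule lin_L[OF B sj[OF j]])
      have "H (lin n a) = cls n B (lin n (\<lambda>k. \<Sum>i\<in>{1..n}. a i * c i k))"
        unfolding H_def using LIN[OF psi_hom[OF psi] X, of a] by simp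
      also have "lin n (\<lambda>k. \<Sum>i\<in>{1..n}. a i * c i k) = lin n (\<lambda>k. t * b k)" by (rule lin_cong[OF Rt])
      also have "\<dots> = of_int t * lin n b" by (rule lin_smult)
      finally have e: "H (lin n a) = cls n B (of_int t * lin n b)" .
      have "H (1 + lin n a * lin n a) = cls n B (1 + (of_int t * lin n b) * (of_int t * lin n b))"
        by (rule hom_sq[OF Hh Gh lin_car car_mult[OF car_of_int lin_car] e])
      also have "(of_int t * lin n b) * (of_int t * lin n b) = of_int (t * t) * (lin n b * lin n b)"
        by (simp add: algebra_simps)
      also have "\<dots> = lin n b * lin n b" using t by simp
      finally have e2: "H (1 + lin n a * lin n a) = cls n B (1 + lin n b * lin n b)" .
      have "H (1 + alphaP A j ^ 2) = H (1 + lin n a * lin n a)"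
        unfolding H_def using key_sq[OF j LA] by simp
      also have "\<dots> = cls n B (1 + lin n b * lin n b)" by (rule e2)
      also have "\<dots> = cls n B (1 + alphaP B (\<sigma> j) ^ 2)" using key_sq[OF sj[OF j] LB] by simp
      finally show "(1 + alphaP A j ^ 2) \<in> carrier (polyR n) \<and> (1 + alphaP B (\<sigma> j) ^ 2) \<in> carrier (polyR n)
              \<and> H (1 + alphaP A j ^ 2) = cls n B (1 + alphaP B (\<sigma> j) ^ 2)" using c1 c2 by blast
    qed
    have "H (\<Prod>j\<in>{1..n}. 1 + alphaP A j ^ 2) = cls n B (\<Prod>j\<in>{1..n}. 1 + alphaP B (\<sigma> j) ^ 2)"
      by (rule hom_prod[OF Hh Gh F]) simp
    also have "(\<Prod>j\<in>{1..n}. 1 + alphaP B (\<sigma> j) ^ 2) = (\<Prod>j\<in>{1..n}. 1 + alphaP B j ^ 2)"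
      by (rule prod.reindex_bij_betw[OF sig])
    finally show ?thesis unfolding pontr_def H_def by simp
  qed
  show ?thesis using main pont by blast
qed

end
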